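(* Let $\mathcal{C}=(\mu_\alpha)_{\alpha\in A}$ be a continuous admissible family of valuations of $K[x]$ and let $\phi$ be a limit key polynomial for $\mathcal{C}$. Let $f\in K[x]$ and let $f=q\phi+r$ be the Euclidean division of $f$ by $\phi$. If $f$ is not $A$-divisible by $\phi$, then $\mu_A(r)=\mu_A(f)<\mu_\alpha(q\phi)$ for all sufficiently large $\alpha\in A$.
   Context: $K$ is a field with valuation $\nu$, and all valuations of $K[x]$ extend $\nu$ with values in a fixed totally ordered group $\tilde\Gamma$. For a valuation $\mu$ of $K[x]$: $f\sim_\mu g$ if $\mu(f-g)>\mu(f)$, and $\phi$ $\mu$-divides $g$ if $g\sim_\mu\phi h$ for some $h\in K[x]$. A key polynomial for $\mu$ is a monic polynomial that is $\mu$-irreducible and $\mu$-minimal (MacLane); for a key polynomial $\phi$ and $\gamma>\mu(\phi)$ the augmented valuation $[\mu;\mu'(\phi)=\gamma]$ is $\mu'(\sum_j g_j\phi^j)=\inf_j(\mu(g_j)+j\gamma)$ for the $\phi$-adic expansion with $\deg g_j<\deg\phi$. A continuous admissible family $\mathcal{C}=(\mu_\alpha)_{\alpha\in A}$: $A$ is a totally ordered set without maximum, there is a valuation $\mu$ of $K[x]$, monic polynomials $\phi_\alpha$ all of the same degree and values $\gamma_\alpha\in\tilde\Gamma$ strictly increasing without maximum, with $\mu_\alpha=[\mu;\mu_\alpha(\phi_\alpha)=\gamma_\alpha]$, and for $\alpha<\beta$, $\phi_\beta$ is a key polynomial for $\mu_\alpha$ and $\mu_\beta=[\mu_\alpha;\mu_\beta(\phi_\beta)=\gamma_\beta]$,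 $\gamma_\beta>\mu_\alpha(\phi_\beta)=\gamma_\alpha$. $\tilde\Phi(\mathcal{C})=\{f\in K[x]:\mu_\alpha(f)<\mu_\beta(f)\text{ for all }\alpha<\beta\text{ in }A\}$. A limit key polynomial for $\mathcal{C}$ is a monic polynomial of minimal degree in $\tilde\Phi(\mathcal{C})$ (assumed nonempty). A polynomial $f$ $A$-divides $g$ if there is $\alpha\in A$ such that $f$ $\mu_\beta$-divides $g$ for all $\beta\ge\alpha$. For a limit key polynomial $\phi$, a polynomial belongs to $\tilde\Phi(\mathcal{C})$ if and only if it is $A$-divisible by $\phi$. For $f\notin\tilde\Phi(\mathcal{C})$, $\mu_A(f)=\sup_{\alpha\in A}\mu_\alpha(f)$, which equals $\mu_\alpha(f)$ for all sufficiently large $\alpha$. *)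

theory Defs
  imports "HOL-Computational_Algebra.Polynomial" "HOL-Library.Extended"
begin

text \<open>Values live in \<open>\<Gamma>\<infinity> = \<Gamma> \<union> {\<infinity>}\<close>, realised as \<open>'g extended\<close>
  (constructor \<open>Fin\<close> for elements of the totally ordered group \<open>'g\<close>, \<open>Pinf\<close> for \<infinity>);
  the value \<open>Minf\<close> is excluded by the definitions below.\<close>

definition field_valuation :: "('k::field \<Rightarrow> 'g::linordered_ab_group_add extended) \<Rightarrow> bool" where
  "field_valuation \<nu> \<longleftrightarrow>
     (\<forall>a. \<nu> a \<noteq> Minf) \<and> (\<forall>a. \<nu> a = Pinf \<longleftrightarrow> a = 0) \<and>
     (\<forall>a b. \<nu> (a * b) = \<nu> a + \<nu> b) \<and> (\<forall>a b. min (\<nu> a) (\<nu> b) \<le> \<nu> (a + b))"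

text \<open>A valuation of \<open>K[x]\<close> extending \<open>\<nu>\<close> (its support \<open>\<mu>\<^sup>-\<^sup>1(\<infinity>)\<close> may be a nonzero prime).\<close>
definition poly_valuation ::
  "('k::field \<Rightarrow> 'g::linordered_ab_group_add extended) \<Rightarrow> ('k poly \<Rightarrow> 'g extended) \<Rightarrow> bool" where
  "poly_valuation \<nu> \<mu> \<longleftrightarrow>
     (\<forall>f. \<mu> f \<noteq> Minf) \<and> \<mu> 0 = Pinf \<and> \<mu> 1 = 0 \<and>
     (\<forall>f g. \<mu> (f * g) = \<mu> f + \<mu> g) \<and> (\<forall>f g. min (\<mu> f) (\<mu> g) \<le> \<mu> (f + g)) \<and>
     (\<forall>c. \<mu> [:c:] = \<nu> c)"

definition mu_equiv :: "('k::field poly \<Rightarrow> 'g::linordered_ab_group_add extended) \<Rightarrow> 'k poly \<Rightarrow> 'k poly \<Rightarrow> bool" where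
  "mu_equiv \<mu> f g \<longleftrightarrow> \<mu> (f - g) > \<mu> f"

definition mu_divides :: "('k::field poly \<Rightarrow> 'g::linordered_ab_group_add extended) \<Rightarrow> 'k poly \<Rightarrow> 'k poly \<Rightarrow> bool" where
  "mu_divides \<mu> \<phi> g \<longleftrightarrow> (\<exists>h. mu_equiv \<mu> g (\<phi> * h))"

text \<open>\<open>\<mu>\<close>-irreducible: the initial form of \<open>\<phi>\<close> generates a nonzero proper prime ideal
  of the graded algebra, i.e. \<open>\<mu> \<phi> < \<infinity>\<close>, \<open>\<phi>\<close> does not \<open>\<mu>\<close>-divide 1, and
  \<open>\<phi> |\<^sub>\<mu> g h\<close> implies \<open>\<phi> |\<^sub>\<mu> g\<close> or \<open>\<phi> |\<^sub>\<mu> h\<close>.\<close>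
definition mu_irreducible :: "('k::field poly \<Rightarrow> 'g::linordered_ab_group_add extended) \<Rightarrow> 'k poly \<Rightarrow> bool" where
  "mu_irreducible \<mu> \<phi> \<longleftrightarrow>
     \<mu> \<phi> \<noteq> Pinf \<and> \<not> mu_divides \<mu> \<phi> 1 \<and>
     (\<forall>g h. mu_divides \<mu> \<phi> (g * h) \<longrightarrow> mu_divides \<mu> \<phi> g \<or> mu_divides \<mu> \<phi> h)"

definition mu_minimal :: "('k::field poly \<Rightarrow> 'g::linordered_ab_group_add extended) \<Rightarrow> 'k poly \<Rightarrow> bool" where
  "mu_minimal \<mu> \<phi> \<longleftrightarrow> (\<forall>f. f \<noteq> 0 \<longrightarrow> mu_divides \<mu> \<phi> f \<longrightarrow> degree f \<ge> degree \<phi>)"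

definition key_polynomial :: "('k::field poly \<Rightarrow> 'g::linordered_ab_group_add extended) \<Rightarrow> 'k poly \<Rightarrow> bool" where
  "key_polynomial \<mu> \<phi> \<longleftrightarrow> lead_coeff \<phi> = 1 \<and> mu_irreducible \<mu> \<phi> \<and> mu_minimal \<mu> \<phi>"

text \<open>The \<open>j\<close>-th coefficient of the \<open>\<phi>\<close>-adic expansion \<open>f = \<Sum>\<^sub>j f\<^sub>j \<phi>\<^sup>j\<close>, \<open>deg f\<^sub>j < deg \<phi>\<close>.\<close>
definition adic_coeff :: "'k::field poly \<Rightarrow> 'k poly \<Rightarrow> nat \<Rightarrow> 'k poly" where
  "adic_coeff \<phi> f j = (f div \<phi> ^ j) mod \<phi>"

text \<open>Augmented valuation \<open>[\<mu>; \<mu>'(\<phi>) = \<gamma>]\<close>: \<open>\<mu>'(\<Sum>\<^sub>j f\<^sub>j \<phi>\<^sup>j) = min\<^sub>j (\<mu>(f\<^sub>j) + j\<gamma>)\<close>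
  (all nonzero terms of the expansion have index \<open>j \<le> deg f\<close>).\<close>
definition augment ::
  "('k::field poly \<Rightarrow> 'g::linordered_ab_group_add extended) \<Rightarrow> 'k poly \<Rightarrow> 'g \<Rightarrow> ('k poly \<Rightarrow> 'g extended)" where
  "augment \<mu> \<phi> \<gamma> = (\<lambda>f. Min ((\<lambda>j. \<mu> (adic_coeff \<phi> f j) + Fin (\<Sum>i<j. \<gamma>)) ` {0..degree f}))"

text \<open>Continuous admissible family indexed by the totally ordered type \<open>'a\<close> (no maximum):
  \<open>\<mu>\<^sub>\<alpha> = augment \<mu> (\<phi>s \<alpha>) (\<gamma>s \<alpha>)\<close>.\<close>
definition continuous_family ::
  "('k::field \<Rightarrow> 'g::linordered_ab_group_add extended) \<Rightarrow> ('k poly \<Rightarrow> 'g extended)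
   \<Rightarrow> ('a::linorder \<Rightarrow> 'k poly) \<Rightarrow> ('a \<Rightarrow> 'g) \<Rightarrow> bool" where
  "continuous_family \<nu> \<mu> \<phi>s \<gamma>s \<longleftrightarrow>
     (\<forall>\<alpha>::'a. \<exists>\<beta>. \<alpha> < \<beta>) \<and>
     poly_valuation \<nu> \<mu> \<and>
     (\<forall>\<alpha>. key_polynomial \<mu> (\<phi>s \<alpha>) \<and> \<mu> (\<phi>s \<alpha>) < Fin (\<gamma>s \<alpha>)) \<and>
     (\<forall>\<alpha> \<beta>. degree (\<phi>s \<alpha>) = degree (\<phi>s \<beta>)) \<and>
     strict_mono \<gamma>s \<and> (\<forall>\<alpha>. \<exists>\<beta>. \<gamma>s \<alpha> < \<gamma>s \<beta>) \<and>
     (\<forall>\<alpha> \<beta>. \<alpha> < \<beta> \<longrightarrow>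
        key_polynomial (augment \<mu> (\<phi>s \<alpha>) (\<gamma>s \<alpha>)) (\<phi>s \<beta>) \<and>
        augment \<mu> (\<phi>s \<alpha>) (\<gamma>s \<alpha>) (\<phi>s \<beta>) = Fin (\<gamma>s \<alpha>) \<and>
        augment \<mu> (\<phi>s \<beta>) (\<gamma>s \<beta>) =
          augment (augment \<mu> (\<phi>s \<alpha>) (\<gamma>s \<alpha>)) (\<phi>s \<beta>) (\<gamma>s \<beta>))"

definition PhiC :: "('a::linorder \<Rightarrow> 'k::field poly \<Rightarrow> 'g::linordered_ab_group_add extended) \<Rightarrow> 'k poly set" where
  "PhiC \<mu>s = {f. \<forall>\<alpha> \<beta>. \<alpha> < \<beta> \<longrightarrow> \<mu>s \<alpha> f < \<mu>s \<beta> f}"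

definition limit_key_polynomial ::
  "('a::linorder \<Rightarrow> 'k::field poly \<Rightarrow> 'g::linordered_ab_group_add extended) \<Rightarrow> 'k poly \<Rightarrow> bool" where
  "limit_key_polynomial \<mu>s \<phi> \<longleftrightarrow>
     lead_coeff \<phi> = 1 \<and> \<phi> \<in> PhiC \<mu>s \<and> (\<forall>g. lead_coeff g = 1 \<and> g \<in> PhiC \<mu>s \<longrightarrow> degree \<phi> \<le> degree g)"

definition A_divides ::
  "('a::linorder \<Rightarrow> 'k::field poly \<Rightarrow> 'g::linordered_ab_group_add extended) \<Rightarrow> 'k poly \<Rightarrow> 'k poly \<Rightarrow> bool" where
  "A_divides \<mu>s f g \<longleftrightarrow> (\<exists>\<alpha>. \<forall>\<beta>. \<alpha> \<le> \<beta> \<longrightarrow> mu_divides (\<mu>s \<beta>) f g)"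

definition mu_A :: "('a::linorder \<Rightarrow> 'k::field poly \<Rightarrow> 'g::linordered_ab_group_add extended) \<Rightarrow> 'k poly \<Rightarrow> 'g extended" where
  "mu_A \<mu>s f = (THE s. (\<forall>\<alpha>. \<mu>s \<alpha> f \<le> s) \<and> (\<forall>u. (\<forall>\<alpha>. \<mu>s \<alpha> f \<le> u) \<longrightarrow> s \<le> u))"

end

theory Submission
  imports Defs
begin
section \<open>Arithmetic in extended\<close>

lemma ext_add_Pinf_left[simp]: "a \<noteq> Minf \<Longrightarrow> Pinf + a = Pinf"
  by (cases a) auto
lemma ext_add_Pinf_right[simp]: "a \<noteq> Minf \<Longrightarrow> a + Pinf = Pinf"
  by (cases a) auto

lemma ext_add_eq_Pinf: "a \<noteq> Minf \<Longrightarrow> b \<noteq> Minf \<Longrightarrow> (a + b = Pinf) = (a = Pinf \<or> b = Pinf)"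
  by (cases a; cases b) auto

lemma ext_add_ne_Minf: "a \<noteq> Minf \<Longrightarrow> b \<noteq> Minf \<Longrightarrow> a + b \<noteq> Minf"
  by (cases a; cases b) auto

lemma ext_min_ne_Minf: "a \<noteq> Minf \<Longrightarrow> b \<noteq> Minf \<Longrightarrow> min a b \<noteq> Minf"
  by (simp add: min_def)

lemma ext_add_strict_left:
  fixes a b c :: "'g::linordered_ab_group_add extended"
  shows "c \<noteq> Pinf \<Longrightarrow> c \<noteq> Minf \<Longrightarrow> a < b \<Longrightarrow> c + a < c + b"
  by (cases a; cases b; cases c) auto

lemma ext_add_strict_right:
  fixes a b c :: "'g::linordered_ab_group_add extended"
  shows "c \<noteq> Pinf \<Longrightarrow> c \<noteq> Minf \<Longrightarrow> a < b \<Longrightarrow> a + c < b + c"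
  by (cases a; cases b; cases c) auto

lemma ext_add_cancel_less:
  fixes a b c :: "'g::linordered_ab_group_add extended"
  shows "c \<noteq> Pinf \<Longrightarrow> c \<noteq> Minf \<Longrightarrow> (c + a < c + b) = (a < b)"
  by (cases a; cases b; cases c) auto

lemma ext_add_cancel_le:
  fixes a b c :: "'g::linordered_ab_group_add extended"
  shows "c \<noteq> Pinf \<Longrightarrow> c \<noteq> Minf \<Longrightarrow> (c + a \<le> c + b) = (a \<le> b)"
  by (cases a; cases b; cases c) auto

lemma ext_add_le_less:
  fixes a a' b b' :: "'g::linordered_ab_group_add extended"
  shows "a \<le> a' \<Longrightarrow> b < b' \<Longrightarrow> a \<noteq> Pinf \<Longrightarrow> a \<noteq> Minf \<Longrightarrow> b \<noteq> Minf \<Longrightarrow> a + b < a' + b'"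
  by (cases a; cases b; cases a'; cases b') (auto intro: add_le_less_mono)

lemma ext_min_add_left:
  fixes a b c :: "'g::linordered_ab_group_add extended"
  shows "c + min a b = min (c + a) (c + b)"
  by (cases "a \<le> b") (auto simp: min_def add_left_mono intro: antisym add_left_mono)

lemma ext_double_zero:
  fixes a :: "'g::linordered_ab_group_add extended"
  shows "a + a = 0 \<Longrightarrow> a = 0"
  by (cases a) (auto simp: zero_extended_def)

lemma ext_add_left_mono_le:
  fixes a b c :: "'g::linordered_ab_group_add extended"
  shows "a \<le> b \<Longrightarrow> c + a \<le> c + b"
  by (rule add_left_mono)

section \<open>Valuations\<close>

definition val :: "('k::field poly \<Rightarrow> 'g::linordered_ab_group_add extended) \<Rightarrow> bool" where
  "val v \<longleftrightarrow> (\<forall>f. v f \<noteq> Minf) \<and> (\<forall>f. v f = Pinf \<longleftrightarrow> f = 0) \<and>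
     (\<forall>f g. v (f * g) = v f + v g) \<and> (\<forall>f g. min (v f) (v g) \<le> v (f + g))"

lemma val_Minf: "val v \<Longrightarrow> v f \<noteq> Minf" by (simp add: val_def)
lemma val_Pinf_iff: "val v \<Longrightarrow> v f = Pinf \<longleftrightarrow> f = 0" by (simp add: val_def)
lemma val_0[simp]: "val v \<Longrightarrow> v 0 = Pinf" by (simp add: val_def)
lemma val_mult: "val v \<Longrightarrow> v (f * g) = v f + v g" by (simp add: val_def)
lemma val_add: "val v \<Longrightarrow> min (v f) (v g) \<le> v (f + g)" by (simp add: val_def)
lemma val_fin: "val v \<Longrightarrow> f \<noteq> 0 \<Longrightarrow> \<exists>x. v f = Fin x"
  by (cases "v f") (auto simp: val_def)
lemma val_lt_Pinf: "val v \<Longrightarrow> f \<noteq> 0 \<Longrightarrow> v f < Pinf"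
  using val_fin by fastforce

lemma val_1: "val v \<Longrightarrow> v 1 = 0"
proof -
  assume v: "val v"
  have "v 1 = v 1 + v 1" using val_mult[OF v, of 1 1] by simp
  then obtain x where "v 1 = Fin x" using val_fin[OF v, of 1] by auto
  with \<open>v 1 = v 1 + v 1\<close> show ?thesis by (simp add: zero_extended_def)
qed

lemma val_uminus: "val v \<Longrightarrow> v (- f) = v f"
proof -
  assume v: "val v"
  have "v (-1) + v (-1) = 0" using val_mult[OF v, of "-1" "-1"] val_1[OF v] by simp
  hence "v (-1) = 0" by (rule ext_double_zero)
  have "v (- f) = v (-1 * f)" by simp
  also have "\<dots> = v f" using val_mult[OF v, of "-1" f] \<open>v (-1) = 0\<close> by simp
  finally show ?thesis .
qed

lemma ultra_strict:
  fixes w :: "'k::field poly \<Rightarrow> 'g::linordered_ab_group_add extended"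
  assumes u: "\<And>f g. min (w f) (w g) \<le> w (f + g)" and n: "\<And>f. w (- f) = w f"
    and lt: "w a < w b"
  shows "w (a + b) = w a"
proof -
  have 1: "w a \<le> w (a + b)" using u[of a b] lt by (simp add: min_def split: if_splits)
  have "min (w (a + b)) (w (- b)) \<le> w a" using u[of "a + b" "- b"] by simp
  hence "min (w (a + b)) (w b) \<le> w a" using n by simp
  thus ?thesis using 1 lt by (auto simp: min_def split: if_splits)
qed

lemma val_strict: "val v \<Longrightarrow> v a < v b \<Longrightarrow> v (a + b) = v a"
  by (rule ultra_strict[of v]) (auto simp: val_add val_uminus)

lemma val_diff: "val v \<Longrightarrow> min (v f) (v g) \<le> v (f - g)"
  using val_add[of v f "- g"] val_uminus[of v g] by simp

lemma val_equiv_eq: "val v \<Longrightarrow> v (g - k) > v g \<Longrightarrow> v k = v g"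
proof -
  assume v: "val v" and lt: "v (g - k) > v g"
  have "v (k - g) = v (g - k)" using val_uminus[OF v, of "g - k"] by simp
  hence "v (g + (k - g)) = v g" using val_strict[OF v, of g "k - g"] lt by simp
  thus ?thesis by simp
qed

definition AT :: "('k::field poly \<Rightarrow> 'g::linordered_ab_group_add extended) \<Rightarrow> 'k poly \<Rightarrow> 'g \<Rightarrow> 'k poly \<Rightarrow> nat \<Rightarrow> 'g extended" where
  "AT v \<psi> \<gamma> g j = v (adic_coeff \<psi> g j) + Fin (\<Sum>i<j. \<gamma>)"

definition AM :: "('k::field poly \<Rightarrow> 'g::linordered_ab_group_add extended) \<Rightarrow> 'k poly \<Rightarrow> 'g \<Rightarrow> nat \<Rightarrow> 'k poly \<Rightarrow> 'g extended" where
  "AM v \<psi> \<gamma> N g = Min (AT v \<psi> \<gamma> g ` {0..N})"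

lemma augment_AM: "augment v \<psi> \<gamma> g = AM v \<psi> \<gamma> (degree g) g"
  by (simp add: augment_def AM_def AT_def)

lemma AM_Suc: "AM v \<psi> \<gamma> (Suc N) g = min (AT v \<psi> \<gamma> g (Suc N)) (AM v \<psi> \<gamma> N g)"
proof -
  have "{0..Suc N} = insert (Suc N) {0..N}" by auto
  thus ?thesis unfolding AM_def by (simp add: Min_insert)
qed

lemma AT_big:
  assumes "val v" "degree \<psi> > 0" "j > degree g"
  shows "AT v \<psi> \<gamma> g j = Pinf"
proof -
  have "\<psi> \<noteq> 0" using assms by auto
  have "degree (\<psi> ^ j) = j * degree \<psi>" using degree_power_eq[OF \<open>\<psi> \<noteq> 0\<close>] by simp
  also have "\<dots> \<ge> j" using assms by simp
  finally have "degree g < degree (\<psi> ^ j)" using assms by simp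
  hence "g div \<psi> ^ j = 0" by (rule div_poly_less)
  thus ?thesis using assms by (simp add: AT_def adic_coeff_def val_0)
qed

lemma AM_stable:
  assumes "val v" "degree \<psi> > 0" "degree g \<le> N"
  shows "AM v \<psi> \<gamma> N g = augment v \<psi> \<gamma> g"
proof -
  have "AM v \<psi> \<gamma> (degree g + k) g = AM v \<psi> \<gamma> (degree g) g" for k
    by (induction k) (simp_all add: AM_Suc AT_big[OF assms(1,2)])
  from this[of "N - degree g"] assms(3) show ?thesis by (simp add: augment_AM)
qed

lemma AT_0: "AT v \<psi> \<gamma> g 0 = v (g mod \<psi>)"
proof -
  have "Fin (\<Sum>i<(0::nat). \<gamma>) = 0" by (simp add: zero_extended_def)
  thus ?thesis by (simp add: AT_def adic_coeff_def)
qed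

lemma AT_Suc: "AT v \<psi> \<gamma> g (Suc j) = Fin \<gamma> + AT v \<psi> \<gamma> (g div \<psi>) j"
proof -
  have 1: "adic_coeff \<psi> g (Suc j) = adic_coeff \<psi> (g div \<psi>) j"
    by (simp add: adic_coeff_def poly_div_mult_right)
  have 2: "Fin (\<Sum>i<Suc j. \<gamma>) = Fin \<gamma> + Fin (\<Sum>i<j. \<gamma>)" by (simp add: add.commute)
  show ?thesis unfolding AT_def 1 2 by (simp only: ac_simps)
qed

lemma AM_Suc_shift: "AM v \<psi> \<gamma> (Suc N) g = min (v (g mod \<psi>)) (Fin \<gamma> + AM v \<psi> \<gamma> N (g div \<psi>))"
proof -
  have "{0..Suc N} = insert 0 (Suc ` {0..N})" by (rule atLeast0_atMost_Suc_eq_insert_0)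
  hence "AT v \<psi> \<gamma> g ` {0..Suc N} = insert (AT v \<psi> \<gamma> g 0) ((AT v \<psi> \<gamma> g \<circ> Suc) ` {0..N})"
    by (simp only: image_insert image_comp)
  hence "AM v \<psi> \<gamma> (Suc N) g = min (AT v \<psi> \<gamma> g 0) (Min ((AT v \<psi> \<gamma> g \<circ> Suc) ` {0..N}))"
  proof -
    assume eq: "AT v \<psi> \<gamma> g ` {0..Suc N} = insert (AT v \<psi> \<gamma> g 0) ((AT v \<psi> \<gamma> g \<circ> Suc) ` {0..N})"
    have fin: "finite ((AT v \<psi> \<gamma> g \<circ> Suc) ` {0..N})" by simp
    have ne: "(AT v \<psi> \<gamma> g \<circ> Suc) ` {0..N} \<noteq> {}" by simp
    show ?thesis unfolding AM_def by (simp only: eq Min_insert[OF fin ne])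
  qed
  also have "(AT v \<psi> \<gamma> g \<circ> Suc) ` {0..N} = (\<lambda>x. Fin \<gamma> + x) ` (AT v \<psi> \<gamma> (g div \<psi>) ` {0..N})"
    by (auto simp: AT_Suc image_iff)
  also have "Min \<dots> = Fin \<gamma> + AM v \<psi> \<gamma> N (g div \<psi>)"
    unfolding AM_def by (rule mono_Min_commute[symmetric]) (auto simp: mono_def add_left_mono)
  finally show ?thesis by (simp add: AT_0)
qed

lemma augment_0[simp]: "val v \<Longrightarrow> augment v \<psi> \<gamma> 0 = Pinf"
  by (simp add: augment_def adic_coeff_def val_0)

lemma degree_div_le: "degree \<psi> > 0 \<Longrightarrow> degree (g div (\<psi>::'k::field poly)) \<le> degree g"
proof (cases "g div \<psi> = 0")
  case False
  assume "degree \<psi> > 0"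
  have "\<not> degree g < degree \<psi>" using False div_poly_less by blast
  hence "degree g > 0" using \<open>degree \<psi> > 0\<close> by linarith
  thus ?thesis using degree_div_less \<open>degree \<psi> > 0\<close> less_imp_le by blast
qed simp

lemma augment_rec:
  assumes "val v" "degree \<psi> > 0"
  shows "augment v \<psi> \<gamma> g = min (v (g mod \<psi>)) (Fin \<gamma> + augment v \<psi> \<gamma> (g div \<psi>))"
proof -
  have "augment v \<psi> \<gamma> g = AM v \<psi> \<gamma> (Suc (degree g)) g" using AM_stable[OF assms] by simp
  also have "\<dots> = min (v (g mod \<psi>)) (Fin \<gamma> + AM v \<psi> \<gamma> (degree g) (g div \<psi>))" by (rule AM_Suc_shift)
  also have "AM v \<psi> \<gamma> (degree g) (g div \<psi>) = augment v \<psi> \<gamma> (g div \<psi>)"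
    using AM_stable[OF assms] degree_div_le[OF assms(2)] by blast
  finally show ?thesis .
qed

lemma divmod_small:
  fixes a \<psi> h :: "'k::field poly"
  assumes "degree a < degree \<psi>"
  shows "(a + \<psi> * h) mod \<psi> = a" "(a + \<psi> * h) div \<psi> = h"
proof -
  have "\<psi> \<noteq> 0" using assms by auto
  show "(a + \<psi> * h) mod \<psi> = a" using assms by (simp add: mod_poly_less)
  show "(a + \<psi> * h) div \<psi> = h" using assms \<open>\<psi> \<noteq> 0\<close> by (simp add: div_poly_less)
qed

lemma augment_decomp:
  assumes "val v" "degree a < degree \<psi>"
  shows "augment v \<psi> \<gamma> (a + \<psi> * h) = min (v a) (Fin \<gamma> + augment v \<psi> \<gamma> h)"
  using augment_rec[OF assms(1), of \<psi> \<gamma> "a + \<psi> * h"] assms divmod_small[OF assms(2)] by (auto simp: val_0)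

lemma augment_small:
  assumes "val v" "degree a < degree \<psi>"
  shows "augment v \<psi> \<gamma> a = v a"
  using augment_decomp[OF assms, of \<gamma> 0] assms(1) by simp

lemma augment_mult_psi:
  assumes "val v" "degree \<psi> > 0"
  shows "augment v \<psi> \<gamma> (\<psi> * h) = Fin \<gamma> + augment v \<psi> \<gamma> h"
  using augment_decomp[OF assms(1), of 0 \<psi> \<gamma> h] assms by (simp add: val_0)

lemma adic_induct:
  fixes \<psi> :: "'k::field poly"
  assumes "degree \<psi> > 0" "P 0" "\<And>g. g \<noteq> 0 \<Longrightarrow> P (g div \<psi>) \<Longrightarrow> P g"
  shows "P g"
proof (induction "degree g" arbitrary: g rule: less_induct)
  case less
  show ?case
  proof (cases "g = 0")
    case True thus ?thesis using assms(2) by simp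
  next
    case False
    have "P (g div \<psi>)"
    proof (cases "g div \<psi> = 0")
      case True thus ?thesis using assms(2) by simp
    next
      case F: False
      have "\<not> degree g < degree \<psi>" using F div_poly_less by blast
      hence "degree g > 0" using assms(1) by linarith
      hence "degree (g div \<psi>) < degree g" using degree_div_less assms by blast
      thus ?thesis by (rule less)
    qed
    thus ?thesis by (rule assms(3)[OF False])
  qed
qed

lemma key_deg:
  assumes v: "val v" and k: "key_polynomial v \<psi>"
  shows "degree \<psi> > 0"
proof (rule ccontr)
  assume "\<not> degree \<psi> > 0"
  hence "degree \<psi> = 0" by simp
  moreover have "lead_coeff \<psi> = 1" using k by (simp add: key_polynomial_def)
  ultimately have "\<psi> = 1" by (metis degree_0_id one_pCons)
  have "mu_divides v \<psi> 1" unfolding mu_divides_def mu_equiv_def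
    using \<open>\<psi> = 1\<close> val_1[OF v] by (intro exI[of _ 1]) (simp add: val_0[OF v] zero_extended_def)
  thus False using k by (simp add: key_polynomial_def mu_irreducible_def)
qed

lemma OSM:
  assumes v: "val v" and m: "mu_minimal v \<psi>" and d: "degree \<psi> > 0"
  shows "v g = min (v (g mod \<psi>)) (v (\<psi> * (g div \<psi>)))"
proof -
  define b where "b = g mod \<psi>"
  define q where "q = g div \<psi>"
  have g: "g = b + \<psi> * q" unfolding b_def q_def by simp
  have ge: "min (v b) (v (\<psi> * q)) \<le> v g" using val_add[OF v, of b "\<psi> * q"] g by simp
  show ?thesis unfolding b_def[symmetric] q_def[symmetric]
  proof (rule ccontr)
    assume ne: "v g \<noteq> min (v b) (v (\<psi> * q))"
    have "v b = v (\<psi> * q)"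
    proof (rule ccontr)
      assume "v b \<noteq> v (\<psi> * q)"
      hence "v b < v (\<psi> * q) \<or> v (\<psi> * q) < v b" by auto
      thus False
      proof
        assume "v b < v (\<psi> * q)"
        hence "v g = v b" using val_strict[OF v] g by simp
        thus False using ne \<open>v b < v (\<psi> * q)\<close> by simp
      next
        assume "v (\<psi> * q) < v b"
        hence "v g = v (\<psi> * q)" using val_strict[OF v, of "\<psi> * q" b] g by (simp add: add.commute)
        thus False using ne \<open>v (\<psi> * q) < v b\<close> by simp
      qed
    qed
    hence lt: "v b < v g" using ne ge by simp
    hence "b \<noteq> 0" using val_0[OF v] by auto
    have "mu_equiv v b (\<psi> * (- q))" unfolding mu_equiv_def using lt g by simp
    hence "mu_divides v \<psi> b" unfolding mu_divides_def by blast
    hence "degree b \<ge> degree \<psi>" using m \<open>b \<noteq> 0\<close> by (simp add: mu_minimal_def)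
    moreover have "degree b < degree \<psi>" unfolding b_def using \<open>b \<noteq> 0\<close> d degree_mod_less'
      by (metis b_def degree_0 not_less0)
    ultimately show False by simp
  qed
qed

lemma OSM_mod_ge:
  assumes "val v" "mu_minimal v \<psi>" "degree \<psi> > 0"
  shows "v g \<le> v (g mod \<psi>)"
  using OSM[OF assms, of g] by simp

context
  fixes v :: "'k::field poly \<Rightarrow> 'g::linordered_ab_group_add extended" and \<psi> :: "'k poly" and \<gamma> :: 'g
  assumes v: "val v" and k: "key_polynomial v \<psi>" and lt: "v \<psi> < Fin \<gamma>"
begin

lemma dpos: "degree \<psi> > 0" using key_deg[OF v k] .

lemma minl: "mu_minimal v \<psi>" using k by (simp add: key_polynomial_def)

abbreviation "w \<equiv> augment v \<psi> \<gamma>"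

lemma w_rec: "w g = min (v (g mod \<psi>)) (Fin \<gamma> + w (g div \<psi>))"
  using augment_rec[OF v dpos] .

lemma w_ge: "v g \<le> w g"
proof (induction g rule: adic_induct[OF dpos])
  case 1 thus ?case using v by simp
next
  case (2 g)
  have "v (\<psi> * (g div \<psi>)) \<le> Fin \<gamma> + w (g div \<psi>)"
    using add_right_mono[OF less_imp_le[OF lt], of "v (g div \<psi>)"] add_left_mono[OF 2(2), of "Fin \<gamma>"]
      val_mult[OF v] by simp
  hence "min (v (g mod \<psi>)) (v (\<psi> * (g div \<psi>))) \<le> min (v (g mod \<psi>)) (Fin \<gamma> + w (g div \<psi>))"
    by (intro min.mono) auto
  thus ?case using OSM[OF v minl dpos, of g] w_rec[of g] by simp
qed

lemma w_Minf: "w g \<noteq> Minf"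
proof (induction g rule: adic_induct[OF dpos])
  case 1 thus ?case using v by simp
next
  case (2 g)
  have "Fin \<gamma> + w (g div \<psi>) \<noteq> Minf" using 2(2) by (cases "w (g div \<psi>)") auto
  thus ?case using w_rec[of g] val_Minf[OF v] by (simp add: min_def)
qed

lemma w_Pinf: "w g = Pinf \<Longrightarrow> g = 0"
proof (induction g rule: adic_induct[OF dpos])
  case 1 thus ?case by simp
next
  case (2 g)
  have "v (g mod \<psi>) = Pinf" "Fin \<gamma> + w (g div \<psi>) = Pinf" using 2(3) w_rec[of g] by (auto simp: min_def split: if_splits)
  hence "g mod \<psi> = 0" "w (g div \<psi>) = Pinf" using val_Pinf_iff[OF v] by (auto, cases "w (g div \<psi>)", auto)
  hence "g mod \<psi> = 0" "g div \<psi> = 0" using 2(2) by auto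
  thus ?case by (metis div_mult_mod_eq mult_zero_left add_0)
qed

lemma w_neg: "w (- g) = w g"
proof -
  have "AT v \<psi> \<gamma> (- g) j = AT v \<psi> \<gamma> g j" for j
    by (simp add: AT_def adic_coeff_def val_uminus[OF v])
  thus ?thesis by (simp add: augment_AM AM_def)
qed

lemma w_ultra: "min (w f) (w g) \<le> w (f + g)"
proof -
  define N where "N = max (degree f) (degree g)"
  have "degree (f + g) \<le> N" unfolding N_def by (rule degree_add_le_max)
  hence e1: "w (f + g) = AM v \<psi> \<gamma> N (f + g)" using AM_stable[OF v dpos] by simp
  have e2: "w f = AM v \<psi> \<gamma> N f" "w g = AM v \<psi> \<gamma> N g" using AM_stable[OF v dpos] N_def by simp_all
  have "min (AM v \<psi> \<gamma> N f) (AM v \<psi> \<gamma> N g) \<le> AT v \<psi> \<gamma> (f + g) j" if "j \<in> {0..N}" for j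
  proof -
    have a: "adic_coeff \<psi> (f + g) j = adic_coeff \<psi> f j + adic_coeff \<psi> g j"
      by (simp add: adic_coeff_def poly_div_add_left poly_mod_add_left)
    have "min (AT v \<psi> \<gamma> f j) (AT v \<psi> \<gamma> g j) = min (v (adic_coeff \<psi> f j)) (v (adic_coeff \<psi> g j)) + Fin (\<Sum>i<j. \<gamma>)"
      unfolding AT_def using ext_min_add_left by (metis add.commute)
    also have "\<dots> \<le> AT v \<psi> \<gamma> (f + g) j" unfolding AT_def a by (rule add_right_mono[OF val_add[OF v]])
    finally have 1: "min (AT v \<psi> \<gamma> f j) (AT v \<psi> \<gamma> g j) \<le> AT v \<psi> \<gamma> (f + g) j" .
    have "AM v \<psi> \<gamma> N f \<le> AT v \<psi> \<gamma> f j" "AM v \<psi> \<gamma> N g \<le> AT v \<psi> \<gamma> g j" unfolding AM_def using that by auto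
    hence "min (AM v \<psi> \<gamma> N f) (AM v \<psi> \<gamma> N g) \<le> min (AT v \<psi> \<gamma> f j) (AT v \<psi> \<gamma> g j)" by (rule min.mono)
    thus ?thesis using 1 by (rule order_trans)
  qed
  hence "min (AM v \<psi> \<gamma> N f) (AM v \<psi> \<gamma> N g) \<le> AM v \<psi> \<gamma> N (f + g)" unfolding AM_def by simp
  thus ?thesis using e1 e2 by simp
qed

lemma w_strict: "w a < w b \<Longrightarrow> w (a + b) = w a"
  by (rule ultra_strict[of w]) (auto simp: w_ultra w_neg)

lemma w_small: "degree a < degree \<psi> \<Longrightarrow> w a = v a"
  using augment_small[OF v] by simp

lemma w_mult_psi: "w (\<psi> * h) = Fin \<gamma> + w h"
  using augment_mult_psi[OF v dpos] by simp

lemma w_small_mult_ge: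
  assumes "degree a < degree \<psi>"
  shows "v a + w g \<le> w (a * g)"
proof (induction g rule: adic_induct[OF dpos])
  case 1 thus ?case using v val_Minf[OF v, of a] by simp
next
  case (2 g)
  define b where "b = g mod \<psi>"
  define q where "q = g div \<psi>"
  have g: "g = b + \<psi> * q" unfolding b_def q_def by simp
  have db: "degree b < degree \<psi>" unfolding b_def using dpos
    by (metis degree_0 degree_mod_less' not_gr_zero)
  have "a * g = a * b + \<psi> * (a * q)" using g by (simp add: algebra_simps)
  hence "min (w (a * b)) (w (\<psi> * (a * q))) \<le> w (a * g)" using w_ultra by metis
  hence 1: "min (w (a * b)) (Fin \<gamma> + w (a * q)) \<le> w (a * g)" using w_mult_psi by simp
  have c2: "v a + v b \<le> w (a * b)" using w_ge[of "a * b"] val_mult[OF v] by simp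
  have c3: "v a + (Fin \<gamma> + w q) \<le> Fin \<gamma> + w (a * q)" using add_left_mono[OF 2(2)[folded q_def], of "Fin \<gamma>"]
    by (simp add: ac_simps)
  have "w g = min (v b) (Fin \<gamma> + w q)" using w_rec[of g] b_def q_def by simp
  hence "v a + w g = min (v a + v b) (v a + (Fin \<gamma> + w q))" by (simp add: ext_min_add_left)
  also have "\<dots> \<le> min (w (a * b)) (Fin \<gamma> + w (a * q))" using c2 c3 by (rule min.mono)
  also note 1
  finally show ?case .
qed

lemma w_super: "w f + w g \<le> w (f * g)"
proof (induction f rule: adic_induct[OF dpos])
  case 1 thus ?case using w_Minf v by simp
next
  case (2 f)
  define a where "a = f mod \<psi>"
  define q where "q = f div \<psi>"
  have f: "f = a + \<psi> * q" unfolding a_def q_def by simp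
  have da: "degree a < degree \<psi>" unfolding a_def using dpos
    by (metis degree_0 degree_mod_less' not_gr_zero)
  have "f * g = a * g + \<psi> * (q * g)" using f by (simp add: algebra_simps)
  hence "min (w (a * g)) (w (\<psi> * (q * g))) \<le> w (f * g)" using w_ultra by metis
  hence 1: "min (w (a * g)) (Fin \<gamma> + w (q * g)) \<le> w (f * g)" using w_mult_psi by simp
  have c2: "v a + w g \<le> w (a * g)" by (rule w_small_mult_ge[OF da])
  have c3: "(Fin \<gamma> + w q) + w g \<le> Fin \<gamma> + w (q * g)" using add_left_mono[OF 2(2)[folded q_def], of "Fin \<gamma>"]
    by (simp add: ac_simps)
  have "w f = min (v a) (Fin \<gamma> + w q)" using w_rec[of f] a_def q_def by simp
  hence "w f + w g = min (v a + w g) ((Fin \<gamma> + w q) + w g)" using ext_min_add_left by (metis add.commute)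
  also have "\<dots> \<le> min (w (a * g)) (Fin \<gamma> + w (q * g))" using c2 c3 by (rule min.mono)
  also note 1
  finally show ?case .
qed

lemma small_mod:
  assumes da: "degree a < degree \<psi>" and db: "degree b < degree \<psi>"
  shows "v ((a * b) mod \<psi>) \<le> v (a * b)"
proof (cases "a = 0 \<or> b = 0")
  case True thus ?thesis by auto
next
  case False
  define c where "c = (a * b) div \<psi>"
  define d where "d = (a * b) mod \<psi>"
  have e: "a * b - \<psi> * c = d" unfolding c_def d_def by (simp add: minus_div_mult_eq_mod[symmetric] mult.commute)
  show ?thesis
  proof (rule ccontr)
    assume "\<not> ?thesis"
    hence "v (a * b) < v (a * b - \<psi> * c)" using e d_def by simp
    hence "mu_divides v \<psi> (a * b)" unfolding mu_divides_def mu_equiv_def by blast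
    hence "mu_divides v \<psi> a \<or> mu_divides v \<psi> b" using k by (simp add: key_polynomial_def mu_irreducible_def)
    thus False using minl False da db by (auto simp: mu_minimal_def)
  qed
qed

lemma w_sub_step:
  assumes f0: "f \<noteq> 0" and g0: "g \<noteq> 0"
    and B: "Fin \<gamma> + w (f div \<psi>) < v (f mod \<psi>)"
    and IH: "w ((f div \<psi>) * g) \<le> w (f div \<psi>) + w g"
  shows "w (f * g) \<le> w f + w g"
proof -
  define a where "a = f mod \<psi>"
  define q where "q = f div \<psi>"
  have f: "f = a + \<psi> * q" unfolding a_def q_def by simp
  have da: "degree a < degree \<psi>" unfolding a_def using dpos
    by (metis degree_0 degree_mod_less' not_gr_zero)
  have wf: "w f = Fin \<gamma> + w q" using w_rec[of f] B a_def q_def by simp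
  obtain x where x: "w g = Fin x"
    using w_Minf[of g] w_Pinf[of g] g0 by (cases "w g") auto
  have "f * g = \<psi> * (q * g) + a * g" using f by (simp add: algebra_simps)
  have 1: "w (\<psi> * (q * g)) \<le> w f + w g" using IH wf w_mult_psi[of "q * g"] add_left_mono q_def
    by (metis add.assoc)
  have "w f + w g < v a + w g" using B wf a_def q_def x ext_add_strict_right[of "w g"] by simp
  also have "\<dots> \<le> w (a * g)" by (rule w_small_mult_ge[OF da])
  finally have "w (\<psi> * (q * g)) < w (a * g)" using 1 by simp
  hence "w (f * g) = w (\<psi> * (q * g))" using w_strict \<open>f * g = \<psi> * (q * g) + a * g\<close> by simp
  thus ?thesis using 1 by simp
qed

lemma w_sub: "w (f * g) \<le> w f + w g"
proof (induction "degree f + degree g" arbitrary: f g rule: less_induct)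
  case less
  show ?case
  proof (cases "f = 0 \<or> g = 0")
    case True thus ?thesis using w_Minf v by auto
  next
    case False
    hence f0: "f \<noteq> 0" and g0: "g \<noteq> 0" by auto
    have dl: "degree (h div \<psi>) < degree h" if "h div \<psi> \<noteq> 0" for h
    proof -
      have "\<not> degree h < degree \<psi>" using that div_poly_less by blast
      hence "degree h > 0" using dpos by linarith
      thus ?thesis using degree_div_less dpos by blast
    qed
    show ?thesis
    proof (cases "Fin \<gamma> + w (f div \<psi>) < v (f mod \<psi>)")
      case True
      hence "f div \<psi> \<noteq> 0" using v by auto
      hence "w ((f div \<psi>) * g) \<le> w (f div \<psi>) + w g" using less dl by simp
      thus ?thesis using w_sub_step f0 g0 True by blast
    next
      case nB: False
      show ?thesis
      proof (cases "Fin \<gamma> + w (g div \<psi>) < v (g mod \<psi>)")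
        case True
        hence "g div \<psi> \<noteq> 0" using v by auto
        hence "w ((g div \<psi>) * f) \<le> w (g div \<psi>) + w f" using less dl by simp
        hence "w (g * f) \<le> w g + w f" using w_sub_step f0 g0 True by blast
        thus ?thesis by (simp add: ac_simps)
      next
        case nC: False
        have wf: "w f = v (f mod \<psi>)" using w_rec[of f] nB by (simp add: min_def not_less)
        have wg: "w g = v (g mod \<psi>)" using w_rec[of g] nC by (simp add: min_def not_less)
        have da: "degree (f mod \<psi>) < degree \<psi>" "degree (g mod \<psi>) < degree \<psi>" using dpos
          by (metis degree_0 degree_mod_less' not_gr_zero)+
        have "w (f * g) \<le> v ((f * g) mod \<psi>)" using w_rec[of "f * g"] by simp
        also have "(f * g) mod \<psi> = ((f mod \<psi>) * (g mod \<psi>)) mod \<psi>" by (simp add: mod_mult_eq)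
        also have "v \<dots> \<le> v ((f mod \<psi>) * (g mod \<psi>))" using small_mod[OF da] .
        also have "\<dots> = w f + w g" using wf wg val_mult[OF v] by simp
        finally show ?thesis .
      qed
    qed
  qed
qed

lemma val_w: "val w"
  unfolding val_def
proof (intro conjI allI)
  show "w f \<noteq> Minf" for f by (rule w_Minf)
  show "(w f = Pinf) = (f = 0)" for f using w_Pinf v by auto
  show "w (f * g) = w f + w g" for f g using w_sub w_super by (rule antisym)
  show "min (w f) (w g) \<le> w (f + g)" for f g by (rule w_ultra)
qed

end

context
  fixes v :: "'k::field poly \<Rightarrow> 'g::linordered_ab_group_add extended" and \<psi> :: "'k poly" and \<gamma> :: 'g
  assumes v: "val v" and k: "key_polynomial v \<psi>" and lt: "v \<psi> < Fin \<gamma>"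
begin

lemma mu_div_iff_mod:
  assumes g0: "g \<noteq> 0"
  shows "mu_divides v \<psi> g \<longleftrightarrow> v g < v (g mod \<psi>)"
proof
  assume "mu_divides v \<psi> g"
  then obtain h where "v g < v (g - \<psi> * h)" unfolding mu_divides_def mu_equiv_def by blast
  define e where "e = g - \<psi> * h"
  have "g mod \<psi> = e mod \<psi>" unfolding e_def by (simp add: poly_mod_diff_left)
  hence "v e \<le> v (g mod \<psi>)" using OSM_mod_ge[OF v minl[OF v k lt] dpos[OF v k lt]] by simp
  thus "v g < v (g mod \<psi>)" using \<open>v g < v (g - \<psi> * h)\<close> e_def by simp
next
  assume "v g < v (g mod \<psi>)"
  hence "mu_equiv v g (\<psi> * (g div \<psi>))" unfolding mu_equiv_def by (simp add: minus_mult_div_eq_mod)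
  thus "mu_divides v \<psi> g" unfolding mu_divides_def by blast
qed

lemma crit:
  assumes g0: "g \<noteq> 0"
  shows "v g < augment v \<psi> \<gamma> g \<longleftrightarrow> mu_divides v \<psi> g"
proof
  assume "v g < augment v \<psi> \<gamma> g"
  moreover have "augment v \<psi> \<gamma> g \<le> v (g mod \<psi>)" using w_rec[OF v k lt, of g] by simp
  ultimately show "mu_divides v \<psi> g" using mu_div_iff_mod[OF g0] by simp
next
  assume "mu_divides v \<psi> g"
  hence lt1: "v g < v (g mod \<psi>)" using mu_div_iff_mod[OF g0] by simp
  define q where "q = g div \<psi>"
  have "v g = min (v (g mod \<psi>)) (v (\<psi> * q))" unfolding q_def by (rule OSM[OF v minl[OF v k lt] dpos[OF v k lt]])
  hence vg: "v g = v (\<psi> * q)" using lt1 by (simp add: min_def split: if_splits)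
  have "q \<noteq> 0"
  proof
    assume "q = 0"
    hence "v g = Pinf" using vg val_0[OF v] by simp
    thus False using g0 val_Pinf_iff[OF v, of g] by simp
  qed
  then obtain y where y: "v q = Fin y" using val_fin[OF v] by blast
  have "v (\<psi> * q) = v \<psi> + v q" by (rule val_mult[OF v])
  also have "\<dots> < Fin \<gamma> + v q" by (rule ext_add_strict_right) (simp_all add: y lt)
  also have "\<dots> \<le> Fin \<gamma> + augment v \<psi> \<gamma> q" using w_ge[OF v k lt] by (simp add: add_left_mono)
  finally have "v g < Fin \<gamma> + augment v \<psi> \<gamma> q" using vg by simp
  moreover have "augment v \<psi> \<gamma> g = min (v (g mod \<psi>)) (Fin \<gamma> + augment v \<psi> \<gamma> q)"
    using w_rec[OF v k lt, of g] q_def by simp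
  ultimately show "v g < augment v \<psi> \<gamma> g" using lt1 by simp
qed

end

lemma transfer:
  assumes v: "val v" and e1: "v \<psi>1 = Fin t" and e2: "v \<psi>2 = Fin t" and d: "Fin t < v (\<psi>1 - \<psi>2)"
    and g0: "g \<noteq> 0" and md: "mu_divides v \<psi>1 g"
  shows "mu_divides v \<psi>2 g"
proof -
  obtain h where h: "v g < v (g - \<psi>1 * h)" using md unfolding mu_divides_def mu_equiv_def by blast
  have "v (\<psi>1 * h) = v g" using val_equiv_eq[OF v h] .
  have "h \<noteq> 0"
  proof
    assume "h = 0"
    hence "v g = Pinf" using \<open>v (\<psi>1 * h) = v g\<close> val_0[OF v] by simp
    thus False using g0 val_Pinf_iff[OF v, of g] by simp
  qed
  then obtain y where y: "v h = Fin y" using val_fin[OF v] by blast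
  have vg: "v g = Fin t + v h" using \<open>v (\<psi>1 * h) = v g\<close> val_mult[OF v] e1 by simp
  have "Fin t + v h < v (\<psi>1 - \<psi>2) + v h" by (rule ext_add_strict_right) (simp_all add: y d)
  hence "v g < v ((\<psi>1 - \<psi>2) * h)" using vg val_mult[OF v] by simp
  hence "v g < min (v (g - \<psi>1 * h)) (v ((\<psi>1 - \<psi>2) * h))" using h by simp
  also have "\<dots> \<le> v ((g - \<psi>1 * h) + (\<psi>1 - \<psi>2) * h)" by (rule val_add[OF v])
  also have "(g - \<psi>1 * h) + (\<psi>1 - \<psi>2) * h = g - \<psi>2 * h" by (simp add: algebra_simps)
  finally show ?thesis unfolding mu_divides_def mu_equiv_def by blast
qed

lemma supp:
  fixes \<mu> :: "'k::field poly \<Rightarrow> 'g::linordered_ab_group_add extended"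
  assumes pv: "poly_valuation \<nu> \<mu>" and k: "key_polynomial \<mu> \<psi>"
  shows "val \<mu>"
proof -
  have m1: "\<mu> f \<noteq> Minf" for f using pv by (simp add: poly_valuation_def)
  have m0: "\<mu> 0 = Pinf" "\<mu> 1 = 0" using pv by (simp_all add: poly_valuation_def)
  have mm: "\<mu> (f * g) = \<mu> f + \<mu> g" for f g using pv by (simp add: poly_valuation_def)
  have ma: "min (\<mu> f) (\<mu> g) \<le> \<mu> (f + g)" for f g using pv by (simp add: poly_valuation_def)
  have psiP: "\<mu> \<psi> \<noteq> Pinf" and n1: "\<not> mu_divides \<mu> \<psi> 1"
    using k by (simp_all add: key_polynomial_def mu_irreducible_def)
  have "\<psi> \<noteq> 0" using psiP m0 by auto
  have main: "g \<noteq> 0 \<Longrightarrow> \<mu> g \<noteq> Pinf" for g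
  proof (induction "degree g" arbitrary: g rule: less_induct)
    case less
    show ?case
    proof
      assume gP: "\<mu> g = Pinf"
      define S where "S = {n. \<exists>a b. a * \<psi> + b * g \<noteq> 0 \<and> degree (a * \<psi> + b * g) = n}"
      have "degree \<psi> \<in> S" unfolding S_def using \<open>\<psi> \<noteq> 0\<close> by (intro CollectI exI[of _ 1] exI[of _ 0]) simp
      define n where "n = (LEAST n. n \<in> S)"
      have "n \<in> S" unfolding n_def using \<open>degree \<psi> \<in> S\<close> by (rule LeastI)
      then obtain a b where h0: "a * \<psi> + b * g \<noteq> 0" and hn: "degree (a * \<psi> + b * g) = n"
        unfolding S_def by blast
      define h where "h = a * \<psi> + b * g"
      have minS: "a' * \<psi> + b' * g = 0 \<or> n \<le> degree (a' * \<psi> + b' * g)" for a' b'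
      proof (cases "a' * \<psi> + b' * g = 0")
        case False
        hence "degree (a' * \<psi> + b' * g) \<in> S" unfolding S_def by blast
        thus ?thesis unfolding n_def using Least_le by (metis (no_types, lifting))
      qed simp
      have dvd_lemma: "h dvd x" if "x = c * \<psi> + d * g" for x c d
      proof -
        have "x mod h = (c - a * (x div h)) * \<psi> + (d - b * (x div h)) * g"
          using that by (simp add: minus_mult_div_eq_mod[symmetric] h_def algebra_simps)
        moreover have "x mod h = 0 \<or> degree (x mod h) < degree h"
          using degree_mod_less h0 h_def by blast
        ultimately have "x mod h = 0" using minS[of "c - a * (x div h)" "d - b * (x div h)"] hn h_def by auto
        thus ?thesis by (simp add: mod_0_imp_dvd)
      qed
      have hpsi: "h dvd \<psi>" by (rule dvd_lemma[of _ 1 0]) simp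
      have hg: "h dvd g" by (rule dvd_lemma[of _ 0 1]) simp
      show False
      proof (cases "degree h = 0")
        case True
        hence "is_unit h" using is_unit_iff_degree h0 h_def by blast
        then obtain u where u: "1 = h * u" by (auto elim: dvdE)
        have e: "1 - \<psi> * (a * u) = (b * u) * g" using u by (simp add: h_def algebra_simps)
        have "\<mu> ((b * u) * g) = \<mu> (b * u) + Pinf" using mm gP by simp
        hence "\<mu> ((b * u) * g) = Pinf" using m1[of "b * u"] by simp
        hence "mu_equiv \<mu> 1 (\<psi> * (a * u))" unfolding mu_equiv_def using e m0 by (simp add: zero_extended_def)
        thus False using n1 unfolding mu_divides_def by blast
      next
        case False
        obtain e where ge: "g = h * e" using hg by (auto elim: dvdE)
        obtain u where pu: "\<psi> = h * u" using hpsi by (auto elim: dvdE)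
        have "\<mu> h \<noteq> Pinf"
        proof
          assume "\<mu> h = Pinf"
          hence "\<mu> \<psi> = Pinf" using pu mm[of h u] m1[of u] by simp
          thus False using psiP by simp
        qed
        have "\<mu> h + \<mu> e = Pinf" using gP ge mm[of h e] by simp
        hence "\<mu> e = Pinf" using ext_add_eq_Pinf[OF m1 m1] \<open>\<mu> h \<noteq> Pinf\<close> by simp
        have "e \<noteq> 0" using ge less.prems by auto
        have "h \<noteq> 0" using h0 h_def by simp
        have "degree g = degree h + degree e" using ge degree_mult_eq[OF \<open>h \<noteq> 0\<close> \<open>e \<noteq> 0\<close>] by simp
        hence "degree e < degree g" using False by simp
        thus False using less.hyps \<open>e \<noteq> 0\<close> \<open>\<mu> e = Pinf\<close> by blast
      qed
    qed
  qed
  have "(\<mu> f = Pinf) = (f = 0)" for f using main m0 by blast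
  thus ?thesis unfolding val_def using m1 mm ma by blast
qed

lemma monic_diff_deg:
  fixes p q :: "'k::field poly"
  assumes "degree p = degree q" "lead_coeff p = 1" "lead_coeff q = 1" "degree p > 0"
  shows "degree (q - p) < degree p"
proof (cases "q - p = 0")
  case True thus ?thesis using assms by simp
next
  case False
  have "degree (q - p) \<le> degree p" using degree_diff_le_max[of q p] assms by simp
  moreover have "coeff (q - p) (degree p) = 0" using assms by simp
  ultimately show ?thesis using False by (rule degree_less_if_less_eqI)
qed

context
  fixes \<nu> :: "'k::field \<Rightarrow> 'g::linordered_ab_group_add extended"
    and \<mu> :: "'k poly \<Rightarrow> 'g extended"
    and \<phi>s :: "'a::linorder \<Rightarrow> 'k poly" and \<gamma>s :: "'a \<Rightarrow> 'g"
  assumes cf: "continuous_family \<nu> \<mu> \<phi>s \<gamma>s"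
begin

lemma noMax: "\<exists>\<beta>. (\<alpha>::'a) < \<beta>" using cf unfolding continuous_family_def by blast
lemma pv: "poly_valuation \<nu> \<mu>" using cf by (simp add: continuous_family_def)
lemma keymu: "key_polynomial \<mu> (\<phi>s \<alpha>)" using cf by (simp add: continuous_family_def)
lemma ltmu: "\<mu> (\<phi>s \<alpha>) < Fin (\<gamma>s \<alpha>)" using cf by (simp add: continuous_family_def)
lemma deq: "degree (\<phi>s \<alpha>) = degree (\<phi>s \<beta>)" using cf by (simp add: continuous_family_def)
lemma smono: "strict_mono \<gamma>s" using cf by (simp add: continuous_family_def)
lemma step: "\<alpha> < \<beta> \<Longrightarrow> key_polynomial (augment \<mu> (\<phi>s \<alpha>) (\<gamma>s \<alpha>)) (\<phi>s \<beta>) \<and>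
        augment \<mu> (\<phi>s \<alpha>) (\<gamma>s \<alpha>) (\<phi>s \<beta>) = Fin (\<gamma>s \<alpha>) \<and>
        augment \<mu> (\<phi>s \<beta>) (\<gamma>s \<beta>) =
          augment (augment \<mu> (\<phi>s \<alpha>) (\<gamma>s \<alpha>)) (\<phi>s \<beta>) (\<gamma>s \<beta>)"
  using cf unfolding continuous_family_def by blast

lemma valmu: "val \<mu>" using supp[OF pv keymu] .

lemma valM: "val (augment \<mu> (\<phi>s \<alpha>) (\<gamma>s \<alpha>))" using val_w[OF valmu keymu ltmu] .

lemma dposF: "degree (\<phi>s \<alpha>) > 0" using dpos[OF valmu keymu ltmu] .

lemma monicF: "lead_coeff (\<phi>s \<alpha>) = 1" using keymu by (simp add: key_polynomial_def)

lemma ltstep: "\<alpha> < \<beta> \<Longrightarrow> augment \<mu> (\<phi>s \<alpha>) (\<gamma>s \<alpha>) (\<phi>s \<beta>) < Fin (\<gamma>s \<beta>)"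
  using step[of \<alpha> \<beta>] smono by (simp add: strict_mono_def)

lemma monoM: "\<alpha> \<le> \<beta> \<Longrightarrow> augment \<mu> (\<phi>s \<alpha>) (\<gamma>s \<alpha>) g \<le> augment \<mu> (\<phi>s \<beta>) (\<gamma>s \<beta>) g"
proof (cases "\<alpha> = \<beta>")
  case False
  assume "\<alpha> \<le> \<beta>"
  hence lt: "\<alpha> < \<beta>" using False by simp
  have "augment \<mu> (\<phi>s \<alpha>) (\<gamma>s \<alpha>) g \<le> augment (augment \<mu> (\<phi>s \<alpha>) (\<gamma>s \<alpha>)) (\<phi>s \<beta>) (\<gamma>s \<beta>) g"
    using w_ge[OF valM conjunct1[OF step[OF lt]] ltstep[OF lt]] .
  thus ?thesis using step[OF lt] by simp
qed simp

lemma smallM: "degree a < degree (\<phi>s \<alpha>) \<Longrightarrow> augment \<mu> (\<phi>s \<alpha>) (\<gamma>s \<alpha>) a = \<mu> a"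
  using augment_small[OF valmu] by simp

lemma elem:
  assumes ab: "\<alpha> < \<beta>" and bd: "\<beta> < \<delta>"
  shows "Fin (\<gamma>s \<alpha>) < augment \<mu> (\<phi>s \<alpha>) (\<gamma>s \<alpha>) (\<phi>s \<delta> - \<phi>s \<beta>)"
proof -
  define e where "e = \<phi>s \<delta> - \<phi>s \<beta>"
  have de: "degree e < degree (\<phi>s \<beta>)" unfolding e_def
    by (rule monic_diff_deg[OF deq[of \<beta> \<delta>] monicF monicF dposF])
  have "\<phi>s \<delta> = e + \<phi>s \<beta> * 1" unfolding e_def by simp
  hence "augment \<mu> (\<phi>s \<beta>) (\<gamma>s \<beta>) (\<phi>s \<delta>) = min (\<mu> e) (Fin (\<gamma>s \<beta>) + augment \<mu> (\<phi>s \<beta>) (\<gamma>s \<beta>) 1)"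
    using augment_decomp[OF valmu de] by metis
  also have "augment \<mu> (\<phi>s \<beta>) (\<gamma>s \<beta>) 1 = 0" using smallM[of 1 \<beta>] dposF[of \<beta>] val_1[OF valmu] by simp
  finally have "Fin (\<gamma>s \<beta>) = min (\<mu> e) (Fin (\<gamma>s \<beta>))" using step[OF bd] by simp
  hence "Fin (\<gamma>s \<beta>) \<le> \<mu> e" by (simp add: min_def split: if_splits)
  moreover have "augment \<mu> (\<phi>s \<alpha>) (\<gamma>s \<alpha>) e = \<mu> e" using smallM de deq[of \<alpha> \<beta>] by simp
  moreover have "\<gamma>s \<alpha> < \<gamma>s \<beta>" using smono ab by (simp add: strict_mono_def)
  ultimately show ?thesis unfolding e_def[symmetric] by (metis less_extended_simps(1) order.strict_trans2)
qed

lemma critF: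
  assumes "\<alpha> < \<beta>" "g \<noteq> 0"
  shows "augment \<mu> (\<phi>s \<alpha>) (\<gamma>s \<alpha>) g < augment \<mu> (\<phi>s \<beta>) (\<gamma>s \<beta>) g
     \<longleftrightarrow> mu_divides (augment \<mu> (\<phi>s \<alpha>) (\<gamma>s \<alpha>)) (\<phi>s \<beta>) g"
proof -
  have "augment \<mu> (\<phi>s \<beta>) (\<gamma>s \<beta>) = augment (augment \<mu> (\<phi>s \<alpha>) (\<gamma>s \<alpha>)) (\<phi>s \<beta>) (\<gamma>s \<beta>)"
    using step[OF assms(1)] by blast
  thus ?thesis using crit[OF valM conjunct1[OF step[OF assms(1)]] ltstep[OF assms(1)] assms(2)] by simp
qed

lemma stab:
  assumes ab: "\<alpha> < \<beta>" and g0: "g \<noteq> 0"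
    and eq: "augment \<mu> (\<phi>s \<alpha>) (\<gamma>s \<alpha>) g = augment \<mu> (\<phi>s \<beta>) (\<gamma>s \<beta>) g" and bd: "\<beta> \<le> \<delta>"
  shows "augment \<mu> (\<phi>s \<delta>) (\<gamma>s \<delta>) g = augment \<mu> (\<phi>s \<alpha>) (\<gamma>s \<alpha>) g"
proof (cases "\<beta> = \<delta>")
  case True thus ?thesis using eq by simp
next
  case False
  hence bd': "\<beta> < \<delta>" using bd by simp
  have ad: "\<alpha> < \<delta>" using ab bd' by simp
  have nd: "\<not> mu_divides (augment \<mu> (\<phi>s \<alpha>) (\<gamma>s \<alpha>)) (\<phi>s \<beta>) g" using critF[OF ab g0] eq by simp
  have "\<not> augment \<mu> (\<phi>s \<alpha>) (\<gamma>s \<alpha>) g < augment \<mu> (\<phi>s \<delta>) (\<gamma>s \<delta>) g"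
  proof
    assume "augment \<mu> (\<phi>s \<alpha>) (\<gamma>s \<alpha>) g < augment \<mu> (\<phi>s \<delta>) (\<gamma>s \<delta>) g"
    hence md: "mu_divides (augment \<mu> (\<phi>s \<alpha>) (\<gamma>s \<alpha>)) (\<phi>s \<delta>) g" using critF[OF ad g0] by simp
    have d: "Fin (\<gamma>s \<alpha>) < augment \<mu> (\<phi>s \<alpha>) (\<gamma>s \<alpha>) (\<phi>s \<delta> - \<phi>s \<beta>)" by (rule elem[OF ab bd'])
    have e1: "augment \<mu> (\<phi>s \<alpha>) (\<gamma>s \<alpha>) (\<phi>s \<delta>) = Fin (\<gamma>s \<alpha>)" using step[OF ad] by blast
    have e2: "augment \<mu> (\<phi>s \<alpha>) (\<gamma>s \<alpha>) (\<phi>s \<beta>) = Fin (\<gamma>s \<alpha>)" using step[OF ab] by blast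
    have "mu_divides (augment \<mu> (\<phi>s \<alpha>) (\<gamma>s \<alpha>)) (\<phi>s \<beta>) g"
      by (rule transfer[OF valM e1 e2 d g0 md])
    thus False using nd by simp
  qed
  thus ?thesis using monoM[of \<alpha> \<delta> g] ad by simp
qed

lemma notPhi:
  assumes "g \<notin> PhiC (\<lambda>\<alpha>. augment \<mu> (\<phi>s \<alpha>) (\<gamma>s \<alpha>))"
  shows "\<exists>\<alpha>0. (\<forall>\<delta>. \<alpha>0 \<le> \<delta> \<longrightarrow> augment \<mu> (\<phi>s \<delta>) (\<gamma>s \<delta>) g = augment \<mu> (\<phi>s \<alpha>0) (\<gamma>s \<alpha>0) g)
     \<and> (\<forall>\<delta>. augment \<mu> (\<phi>s \<delta>) (\<gamma>s \<delta>) g \<le> augment \<mu> (\<phi>s \<alpha>0) (\<gamma>s \<alpha>0) g)"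
proof (cases "g = 0")
  case True
  have "augment \<mu> (\<phi>s \<delta>) (\<gamma>s \<delta>) 0 = Pinf" for \<delta> by (rule augment_0[OF valmu])
  thus ?thesis using True by simp
next
  case False
  obtain \<alpha> \<beta> where ab: "\<alpha> < \<beta>" and nl: "\<not> augment \<mu> (\<phi>s \<alpha>) (\<gamma>s \<alpha>) g < augment \<mu> (\<phi>s \<beta>) (\<gamma>s \<beta>) g"
  proof -
    have "\<not> (\<forall>\<alpha> \<beta>. \<alpha> < \<beta> \<longrightarrow> augment \<mu> (\<phi>s \<alpha>) (\<gamma>s \<alpha>) g < augment \<mu> (\<phi>s \<beta>) (\<gamma>s \<beta>) g)"
      using assms unfolding PhiC_def by simp
    thus ?thesis using that by blast
  qed
  have eq: "augment \<mu> (\<phi>s \<alpha>) (\<gamma>s \<alpha>) g = augment \<mu> (\<phi>s \<beta>) (\<gamma>s \<beta>) g"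
    using nl monoM[of \<alpha> \<beta> g] ab by (simp add: order_less_imp_le not_less)
  have 1: "\<forall>\<delta>. \<beta> \<le> \<delta> \<longrightarrow> augment \<mu> (\<phi>s \<delta>) (\<gamma>s \<delta>) g = augment \<mu> (\<phi>s \<beta>) (\<gamma>s \<beta>) g"
  proof (intro allI impI)
    fix \<delta> assume "\<beta> \<le> \<delta>"
    from stab[OF ab False eq this] eq
    show "augment \<mu> (\<phi>s \<delta>) (\<gamma>s \<delta>) g = augment \<mu> (\<phi>s \<beta>) (\<gamma>s \<beta>) g" by (rule trans)
  qed
  have 2: "\<forall>\<delta>. augment \<mu> (\<phi>s \<delta>) (\<gamma>s \<delta>) g \<le> augment \<mu> (\<phi>s \<beta>) (\<gamma>s \<beta>) g"
  proof
    fix \<delta>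
    show "augment \<mu> (\<phi>s \<delta>) (\<gamma>s \<delta>) g \<le> augment \<mu> (\<phi>s \<beta>) (\<gamma>s \<beta>) g"
    proof (cases "\<delta> \<le> \<beta>")
      case True thus ?thesis by (rule monoM)
    next
      case False
      hence "\<beta> \<le> \<delta>" by simp
      hence "augment \<mu> (\<phi>s \<delta>) (\<gamma>s \<delta>) g = augment \<mu> (\<phi>s \<beta>) (\<gamma>s \<beta>) g" using 1 by blast
      thus ?thesis by (rule eq_refl)
    qed
  qed
  show ?thesis by (rule exI[of _ \<beta>]) (use 1 2 in blast)
qed

lemma muA_eq:
  assumes "\<forall>\<delta>. augment \<mu> (\<phi>s \<delta>) (\<gamma>s \<delta>) g \<le> c" "augment \<mu> (\<phi>s \<alpha>) (\<gamma>s \<alpha>) g = c"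
  shows "mu_A (\<lambda>\<alpha>. augment \<mu> (\<phi>s \<alpha>) (\<gamma>s \<alpha>)) g = c"
  unfolding mu_A_def
proof (rule the_equality)
  show "(\<forall>\<alpha>. augment \<mu> (\<phi>s \<alpha>) (\<gamma>s \<alpha>) g \<le> c) \<and> (\<forall>u. (\<forall>\<alpha>. augment \<mu> (\<phi>s \<alpha>) (\<gamma>s \<alpha>) g \<le> u) \<longrightarrow> c \<le> u)"
    using assms by auto
next
  fix s
  assume s: "(\<forall>\<alpha>. augment \<mu> (\<phi>s \<alpha>) (\<gamma>s \<alpha>) g \<le> s) \<and> (\<forall>u. (\<forall>\<alpha>. augment \<mu> (\<phi>s \<alpha>) (\<gamma>s \<alpha>) g \<le> u) \<longrightarrow> s \<le> u)"
  hence "s \<le> c" using assms(1) by blast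
  moreover have "c \<le> s" using s assms(2) by blast
  ultimately show "s = c" by (rule antisym)
qed

end

theorem mainTheorem2:
  fixes \<nu> :: "'k::field \<Rightarrow> 'g::linordered_ab_group_add extended"
    and \<mu> :: "'k poly \<Rightarrow> 'g extended"
    and \<phi>s :: "'a::linorder \<Rightarrow> 'k poly" and \<gamma>s :: "'a \<Rightarrow> 'g"
    and \<phi> f :: "'k poly"
  assumes "field_valuation \<nu>"
    and "continuous_family \<nu> \<mu> \<phi>s \<gamma>s"
    and "limit_key_polynomial (\<lambda>\<alpha>. augment \<mu> (\<phi>s \<alpha>) (\<gamma>s \<alpha>)) \<phi>"
    and "f \<noteq> 0"
    and "\<not> A_divides (\<lambda>\<alpha>. augment \<mu> (\<phi>s \<alpha>) (\<gamma>s \<alpha>)) \<phi> f"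
  shows "mu_A (\<lambda>\<alpha>. augment \<mu> (\<phi>s \<alpha>) (\<gamma>s \<alpha>)) (f mod \<phi>)
           = mu_A (\<lambda>\<alpha>. augment \<mu> (\<phi>s \<alpha>) (\<gamma>s \<alpha>)) f
       \<and> (\<exists>\<alpha>0. \<forall>\<alpha>. \<alpha>0 \<le> \<alpha> \<longrightarrow>
            mu_A (\<lambda>\<alpha>. augment \<mu> (\<phi>s \<alpha>) (\<gamma>s \<alpha>)) f < augment \<mu> (\<phi>s \<alpha>) (\<gamma>s \<alpha>) ((f div \<phi>) * \<phi>))"
proof -
  note cf = assms(2)
  have fl1: "lead_coeff \<phi> = 1" and fl2: "\<phi> \<in> PhiC (\<lambda>\<alpha>. augment \<mu> (\<phi>s \<alpha>) (\<gamma>s \<alpha>))"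
    and fl3: "\<And>g. lead_coeff g = 1 \<Longrightarrow> g \<in> PhiC (\<lambda>\<alpha>. augment \<mu> (\<phi>s \<alpha>) (\<gamma>s \<alpha>)) \<Longrightarrow> degree \<phi> \<le> degree g"
    using assms(3) unfolding limit_key_polynomial_def by blast+
  have phi0: "\<phi> \<noteq> 0" using fl1 by auto
  define q where "q = f div \<phi>"
  define r where "r = f mod \<phi>"
  have fqr: "f = q * \<phi> + r" by (simp add: q_def r_def)
  have valA: "val (augment \<mu> (\<phi>s \<alpha>) (\<gamma>s \<alpha>))" for \<alpha> by (rule valM[OF cf])
  have r0: "r \<noteq> 0"
  proof
    assume "r = 0"
    have "A_divides (\<lambda>\<alpha>. augment \<mu> (\<phi>s \<alpha>) (\<gamma>s \<alpha>)) \<phi> f" unfolding A_divides_def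
    proof (intro exI allI impI)
      fix \<beta> :: 'a
      have "augment \<mu> (\<phi>s \<beta>) (\<gamma>s \<beta>) f < Pinf" using val_lt_Pinf[OF valA assms(4)] .
      moreover have "f - \<phi> * q = 0" using fqr \<open>r = 0\<close> by simp
      ultimately have "mu_equiv (augment \<mu> (\<phi>s \<beta>) (\<gamma>s \<beta>)) f (\<phi> * q)"
        unfolding mu_equiv_def using val_0[OF valA] by simp
      thus "mu_divides ((\<lambda>\<alpha>. augment \<mu> (\<phi>s \<alpha>) (\<gamma>s \<alpha>)) \<beta>) \<phi> f" unfolding mu_divides_def by blast
    qed
    thus False using assms(5) by simp
  qed
  have rPhi: "r \<notin> PhiC (\<lambda>\<alpha>. augment \<mu> (\<phi>s \<alpha>) (\<gamma>s \<alpha>))"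
  proof
    assume rin: "r \<in> PhiC (\<lambda>\<alpha>. augment \<mu> (\<phi>s \<alpha>) (\<gamma>s \<alpha>))"
    define c where "c = inverse (lead_coeff r)"
    define r' where "r' = smult c r"
    have c0: "c \<noteq> 0" using r0 by (simp add: c_def)
    have lc: "lead_coeff r' = 1" using r0 by (simp add: r'_def c_def)
    have dr': "degree r' = degree r" using c0 by (simp add: r'_def)
    have r'eq: "r' = [:c:] * r" by (simp add: r'_def)
    have e: "augment \<mu> (\<phi>s \<delta>) (\<gamma>s \<delta>) r' = \<mu> [:c:] + augment \<mu> (\<phi>s \<delta>) (\<gamma>s \<delta>) r" for \<delta>
    proof -
      have "augment \<mu> (\<phi>s \<delta>) (\<gamma>s \<delta>) [:c:] = \<mu> [:c:]" using smallM[OF cf, where a="[:c:]" and \<alpha>=\<delta>] dposF[OF cf, of \<delta>] by simp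
      thus ?thesis using val_mult[OF valA, where f="[:c:]" and g=r] r'eq by simp
    qed
    have cP: "\<mu> [:c:] \<noteq> Pinf" using val_Pinf_iff[OF valmu[OF cf], where f="[:c:]"] c0 by simp
    have cM: "\<mu> [:c:] \<noteq> Minf" using val_Minf[OF valmu[OF cf]] by simp
    have "r' \<in> PhiC (\<lambda>\<alpha>. augment \<mu> (\<phi>s \<alpha>) (\<gamma>s \<alpha>))" unfolding PhiC_def
    proof (intro CollectI allI impI)
      fix \<alpha> \<beta> :: 'a assume "\<alpha> < \<beta>"
      hence "augment \<mu> (\<phi>s \<alpha>) (\<gamma>s \<alpha>) r < augment \<mu> (\<phi>s \<beta>) (\<gamma>s \<beta>) r" using rin unfolding PhiC_def by simp
      hence "\<mu> [:c:] + augment \<mu> (\<phi>s \<alpha>) (\<gamma>s \<alpha>) r < \<mu> [:c:] + augment \<mu> (\<phi>s \<beta>) (\<gamma>s \<beta>) r"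
        by (rule ext_add_strict_left[OF cP cM])
      thus "(\<lambda>\<alpha>. augment \<mu> (\<phi>s \<alpha>) (\<gamma>s \<alpha>)) \<alpha> r' < (\<lambda>\<alpha>. augment \<mu> (\<phi>s \<alpha>) (\<gamma>s \<alpha>)) \<beta> r'"
        using e by simp
    qed
    hence "degree \<phi> \<le> degree r'" using fl3 lc by blast
    moreover have "degree r < degree \<phi>" using r0 phi0 degree_mod_less' r_def by blast
    ultimately show False using dr' by simp
  qed
  obtain \<alpha>0 where st: "\<And>\<delta>. \<alpha>0 \<le> \<delta> \<Longrightarrow> augment \<mu> (\<phi>s \<delta>) (\<gamma>s \<delta>) r = augment \<mu> (\<phi>s \<alpha>0) (\<gamma>s \<alpha>0) r"
    and bd: "\<forall>\<delta>. augment \<mu> (\<phi>s \<delta>) (\<gamma>s \<delta>) r \<le> augment \<mu> (\<phi>s \<alpha>0) (\<gamma>s \<alpha>0) r"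
    using notPhi[OF cf rPhi] by blast
  define c where "c = augment \<mu> (\<phi>s \<alpha>0) (\<gamma>s \<alpha>0) r"
  have muAr: "mu_A (\<lambda>\<alpha>. augment \<mu> (\<phi>s \<alpha>) (\<gamma>s \<alpha>)) r = c"
    using muA_eq[OF cf bd] c_def by simp
  obtain x where cx: "c = Fin x" using val_fin[OF valA r0] c_def by blast
  show ?thesis
  proof (cases "\<exists>\<alpha>1. c < augment \<mu> (\<phi>s \<alpha>1) (\<gamma>s \<alpha>1) (q * \<phi>)")
    case True
    then obtain \<alpha>1 where a1: "c < augment \<mu> (\<phi>s \<alpha>1) (\<gamma>s \<alpha>1) (q * \<phi>)" by blast
    define \<alpha>2 where "\<alpha>2 = max \<alpha>0 \<alpha>1"
    have gt: "c < augment \<mu> (\<phi>s \<delta>) (\<gamma>s \<delta>) (q * \<phi>)" if "\<alpha>2 \<le> \<delta>" for \<delta>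
    proof -
      have "\<alpha>1 \<le> \<delta>" using that \<alpha>2_def by simp
      hence "augment \<mu> (\<phi>s \<alpha>1) (\<gamma>s \<alpha>1) (q * \<phi>) \<le> augment \<mu> (\<phi>s \<delta>) (\<gamma>s \<delta>) (q * \<phi>)" by (rule monoM[OF cf])
      thus ?thesis using a1 by simp
    qed
    have fst: "augment \<mu> (\<phi>s \<delta>) (\<gamma>s \<delta>) f = c" if "\<alpha>2 \<le> \<delta>" for \<delta>
    proof -
      have "\<alpha>0 \<le> \<delta>" using that \<alpha>2_def by simp
      hence rd: "augment \<mu> (\<phi>s \<delta>) (\<gamma>s \<delta>) r = c" using st[of \<delta>] c_def by simp
      hence lt: "augment \<mu> (\<phi>s \<delta>) (\<gamma>s \<delta>) r < augment \<mu> (\<phi>s \<delta>) (\<gamma>s \<delta>) (q * \<phi>)" using gt[OF that] by simp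
      have "augment \<mu> (\<phi>s \<delta>) (\<gamma>s \<delta>) (r + q * \<phi>) = augment \<mu> (\<phi>s \<delta>) (\<gamma>s \<delta>) r"
        by (rule val_strict[OF valA lt])
      thus ?thesis using fqr rd by (simp add: add.commute)
    qed
    have bdf: "\<forall>\<delta>. augment \<mu> (\<phi>s \<delta>) (\<gamma>s \<delta>) f \<le> c"
    proof
      fix \<delta>
      show "augment \<mu> (\<phi>s \<delta>) (\<gamma>s \<delta>) f \<le> c"
      proof (cases "\<delta> \<le> \<alpha>2")
        case True
        hence "augment \<mu> (\<phi>s \<delta>) (\<gamma>s \<delta>) f \<le> augment \<mu> (\<phi>s \<alpha>2) (\<gamma>s \<alpha>2) f" by (rule monoM[OF cf])
        thus ?thesis using fst[of \<alpha>2] by simp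
      next
        case False thus ?thesis using fst[of \<delta>] by simp
      qed
    qed
    have muAf: "mu_A (\<lambda>\<alpha>. augment \<mu> (\<phi>s \<alpha>) (\<gamma>s \<alpha>)) f = c"
      using muA_eq[OF cf bdf fst[of \<alpha>2]] by simp
    show ?thesis
    proof
      show "mu_A (\<lambda>\<alpha>. augment \<mu> (\<phi>s \<alpha>) (\<gamma>s \<alpha>)) (f mod \<phi>) = mu_A (\<lambda>\<alpha>. augment \<mu> (\<phi>s \<alpha>) (\<gamma>s \<alpha>)) f"
        using muAr muAf r_def by simp
      show "\<exists>\<alpha>0. \<forall>\<alpha>. \<alpha>0 \<le> \<alpha> \<longrightarrow>
            mu_A (\<lambda>\<alpha>. augment \<mu> (\<phi>s \<alpha>) (\<gamma>s \<alpha>)) f < augment \<mu> (\<phi>s \<alpha>) (\<gamma>s \<alpha>) ((f div \<phi>) * \<phi>)"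
        using gt muAf q_def by blast
    qed
  next
    case False
    hence le: "augment \<mu> (\<phi>s \<delta>) (\<gamma>s \<delta>) (q * \<phi>) \<le> c" for \<delta> by (simp add: not_less)
    have q0: "q \<noteq> 0"
    proof
      assume "q = 0"
      hence "augment \<mu> (\<phi>s \<alpha>0) (\<gamma>s \<alpha>0) (q * \<phi>) = Pinf" using val_0[OF valA] by simp
      thus False using le[of \<alpha>0] cx by simp
    qed
    have "A_divides (\<lambda>\<alpha>. augment \<mu> (\<phi>s \<alpha>) (\<gamma>s \<alpha>)) \<phi> f" unfolding A_divides_def
    proof (intro exI[of _ \<alpha>0] allI impI)
      fix \<beta> assume ab: "\<alpha>0 \<le> \<beta>"
      obtain \<beta>' where bb: "\<beta> < \<beta>'" using noMax[OF cf] by blast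
      have m1: "augment \<mu> (\<phi>s \<beta>) (\<gamma>s \<beta>) (q * \<phi>) = augment \<mu> (\<phi>s \<beta>) (\<gamma>s \<beta>) q + augment \<mu> (\<phi>s \<beta>) (\<gamma>s \<beta>) \<phi>"
        by (rule val_mult[OF valA])
      have m2: "augment \<mu> (\<phi>s \<beta>') (\<gamma>s \<beta>') (q * \<phi>) = augment \<mu> (\<phi>s \<beta>') (\<gamma>s \<beta>') q + augment \<mu> (\<phi>s \<beta>') (\<gamma>s \<beta>') \<phi>"
        by (rule val_mult[OF valA])
      have l1: "augment \<mu> (\<phi>s \<beta>) (\<gamma>s \<beta>) q \<le> augment \<mu> (\<phi>s \<beta>') (\<gamma>s \<beta>') q"
        using monoM[OF cf] bb by simp
      have l2: "augment \<mu> (\<phi>s \<beta>) (\<gamma>s \<beta>) \<phi> < augment \<mu> (\<phi>s \<beta>') (\<gamma>s \<beta>') \<phi>"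
        using fl2 bb unfolding PhiC_def by simp
      obtain y where y: "augment \<mu> (\<phi>s \<beta>) (\<gamma>s \<beta>) q = Fin y" using val_fin[OF valA q0] by blast
      have "augment \<mu> (\<phi>s \<beta>) (\<gamma>s \<beta>) (q * \<phi>) < augment \<mu> (\<phi>s \<beta>') (\<gamma>s \<beta>') (q * \<phi>)"
        unfolding m1 m2 by (rule ext_add_le_less[OF l1 l2]) (simp_all add: y val_Minf[OF valA])
      also have "\<dots> \<le> c" by (rule le)
      also have "c = augment \<mu> (\<phi>s \<beta>) (\<gamma>s \<beta>) r" using st[OF ab] c_def by simp
      finally have lt: "augment \<mu> (\<phi>s \<beta>) (\<gamma>s \<beta>) (q * \<phi>) < augment \<mu> (\<phi>s \<beta>) (\<gamma>s \<beta>) r" .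
      have Mf: "augment \<mu> (\<phi>s \<beta>) (\<gamma>s \<beta>) f = augment \<mu> (\<phi>s \<beta>) (\<gamma>s \<beta>) (q * \<phi>)"
        using val_strict[OF valA lt] fqr by simp
      have "f - \<phi> * q = r" using fqr by (simp add: algebra_simps)
      hence "mu_equiv (augment \<mu> (\<phi>s \<beta>) (\<gamma>s \<beta>)) f (\<phi> * q)" unfolding mu_equiv_def using lt Mf by simp
      thus "mu_divides ((\<lambda>\<alpha>. augment \<mu> (\<phi>s \<alpha>) (\<gamma>s \<alpha>)) \<beta>) \<phi> f" unfolding mu_divides_def by auto
    qed
    thus ?thesis using assms(5) by simp
  qed
qed

end
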